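(* Let $\vec{\mathcal U}\in\Upsilon$ and $\theta\in L$. Then $\theta\in Bel(\preceq_{\vec{\mathcal U}})$ if and only if $\top\mid\!\sim_{\vec{\mathcal U}}\theta$.
   Context: $L$ is a propositional language built from a finite set of propositional variables with the connectives $\neg,\wedge,\vee,\rightarrow,\top,\bot$; $W$ is the finite set of propositional worlds. For $\theta\in L$, $S_\theta=\{w\in W\mid w\models\theta\}$. Sequences: consider finite sequences $\vec{\mathcal U}=(\mathcal U_0,\ldots,\mathcal U_k)$ ($k\ge 0$) of mutually disjoint subsets of $W$ (components may be empty, possibly repeatedly). $\mathrm{rank}^{\vec{\mathcal U}}(\theta)$ is the least $i$ with $\mathcal U_i\cap S_\theta\neq\emptyset$, and $\infty$ if none (with $i<\infty$ for every integer $i$). $\theta\mid\!\sim_{\vec{\mathcal U}}\phi$ iff either $\mathrm{rank}^{\vec{\mathcal U}}(\theta)<\mathrm{rank}^{\vec{\mathcal U}}(\theta\wedge\neg\phi)$ or $\mathrm{rank}^{\vec{\mathcal U}}(\theta)=\infty$. $\vec{\mathcal U}$ is full iff $\bigcup_i\mathcal U_i=W$, empty iff $\bigcup_i\mathcal U_i=\emptyset$; $\Upsilon$ is the set of such sequences which are full or empty. For $\vec{\mathcal U}\in\Upsilon$, $\theta\preceq_{\vec{\mathcal U}}\phi$ iff (not $\neg\theta\vee\neg\phi\mid\!\sim_{\vec{\mathcal U}}\theta$) or $\neg\phi\mid\!\sim_{\vec{\mathcal U}}\bot$; its strict part $\prec_{\vec{\mathcal U}}$ is given by $\theta\prec_{\vec{\mathcal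 U}}\phi$ iff $\theta\preceq_{\vec{\mathcal U}}\phi$ and not $\phi\preceq_{\vec{\mathcal U}}\theta$. For a relation $\preceq$ on $L$ with strict part $\prec$, its belief set is $Bel(\preceq)=\{\theta\mid\bot\prec\theta\}$ if $\bot\prec\theta$ for some $\theta\in L$, and $Bel(\preceq)=L$ otherwise. *)

theory Defs
  imports Main "HOL-Library.Extended_Nat"
begin

datatype 'v form = Var 'v | Neg "'v form" | Conj "'v form" "'v form"
  | Disj "'v form" "'v form" | Imp "'v form" "'v form" | Top | Bot

type_synonym 'v world = "'v \<Rightarrow> bool"

fun models :: "'v world \<Rightarrow> 'v form \<Rightarrow> bool" where
  "models w (Var p) = w p"
| "models w (Neg a) = (\<not> models w a)"
| "models w (Conj a b) = (models w a \<and> models w b)"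
| "models w (Disj a b) = (models w a \<or> models w b)"
| "models w (Imp a b) = (models w a \<longrightarrow> models w b)"
| "models w Top = True"
| "models w Bot = False"

text \<open>W is the set of all worlds (UNIV :: 'v world set), finite when 'v is finite.\<close>
definition S :: "'v form \<Rightarrow> 'v world set" where
  "S \<theta> = {w. models w \<theta>}"

definition is_seq :: "'v world set list \<Rightarrow> bool" where
  "is_seq U \<longleftrightarrow> U \<noteq> [] \<and>
     (\<forall>i<length U. \<forall>j<length U. i \<noteq> j \<longrightarrow> U ! i \<inter> U ! j = {})"

definition rank :: "'v world set list \<Rightarrow> 'v form \<Rightarrow> enat" where
  "rank U \<theta> = (if \<exists>i<length U. U ! i \<inter> S \<theta> \<noteq> {}
     then enat (LEAST i. i < length U \<and> U ! i \<inter> S \<theta> \<noteq> {}) else \<infinity>)"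

definition nmcons :: "'v world set list \<Rightarrow> 'v form \<Rightarrow> 'v form \<Rightarrow> bool" where
  "nmcons U \<theta> \<phi> \<longleftrightarrow> rank U \<theta> < rank U (Conj \<theta> (Neg \<phi>)) \<or> rank U \<theta> = \<infinity>"

definition Upsilon :: "'v world set list set" where
  "Upsilon = {U. is_seq U \<and> (\<Union>(set U) = UNIV \<or> \<Union>(set U) = {})}"

definition preceq :: "'v world set list \<Rightarrow> 'v form \<Rightarrow> 'v form \<Rightarrow> bool" where
  "preceq U \<theta> \<phi> \<longleftrightarrow> \<not> nmcons U (Disj (Neg \<theta>) (Neg \<phi>)) \<theta> \<or> nmcons U (Neg \<phi>) Bot"

definition strict_part :: "('a \<Rightarrow> 'a \<Rightarrow> bool) \<Rightarrow> 'a \<Rightarrow> 'a \<Rightarrow> bool" where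
  "strict_part R x y \<longleftrightarrow> R x y \<and> \<not> R y x"

definition Bel :: "('v form \<Rightarrow> 'v form \<Rightarrow> bool) \<Rightarrow> 'v form set" where
  "Bel R = (if \<exists>\<theta>. strict_part R Bot \<theta> then {\<theta>. strict_part R Bot \<theta>} else UNIV)"

end

theory Submission
  imports Defs
begin

lemma rank_S: "S a = S b \<Longrightarrow> rank U a = rank U b"
  by (simp add: rank_def)

lemma rank_empty: "S a = {} \<Longrightarrow> rank U a = \<infinity>"
  by (simp add: rank_def)

lemma rank_full: "\<Union>(set U) = UNIV \<Longrightarrow> S a \<noteq> {} \<Longrightarrow> rank U a \<noteq> \<infinity>"
proof -
  assume f: "\<Union>(set U) = UNIV" and n: "S a \<noteq> {}"
  then obtain w where "w \<in> S a" by blast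
  moreover obtain X where "X \<in> set U" "w \<in> X" using f by blast
  then obtain i where "i < length U" "U ! i = X" by (meson in_set_conv_nth)
  ultimately have "\<exists>i<length U. U ! i \<inter> S a \<noteq> {}" using \<open>w \<in> X\<close> by blast
  then show ?thesis by (simp add: rank_def)
qed

lemma rank_emp: "\<Union>(set U) = {} \<Longrightarrow> rank U a = \<infinity>"
  unfolding rank_def by (auto dest!: nth_mem)

theorem proposition4:
  fixes U :: "('v::finite) world set list" and \<theta> :: "'v form"
  assumes "U \<in> Upsilon"
  shows "\<theta> \<in> Bel (preceq U) \<longleftrightarrow> nmcons U Top \<theta>"
proof -
  have "\<Union>(set U) = UNIV \<or> \<Union>(set U) = {}" using assms by (simp add: Upsilon_def)
  then show ?thesis
  proof
    assume e: "\<Union>(set U) = {}"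
    have "\<not> strict_part (preceq U) Bot x" for x
      by (simp add: strict_part_def preceq_def nmcons_def rank_emp[OF e])
    then show ?thesis by (simp add: Bel_def nmcons_def rank_emp[OF e])
  next
    assume f: "\<Union>(set U) = UNIV"
    have top: "rank U Top \<noteq> \<infinity>" by (rule rank_full[OF f]) (simp add: S_def)
    have st: "strict_part (preceq U) Bot x \<longleftrightarrow> nmcons U Top x" for x
    proof -
      have e1: "rank U (Disj (Neg Bot) (Neg x)) = rank U Top"
        by (rule rank_S) (simp add: S_def)
      have e2: "rank U (Conj (Disj (Neg Bot) (Neg x)) (Neg Bot)) = rank U Top"
        by (rule rank_S) (simp add: S_def)
      have e3: "rank U (Disj (Neg x) (Neg Bot)) = rank U Top"
        by (rule rank_S) (simp add: S_def)
      have e4: "rank U (Conj (Disj (Neg x) (Neg Bot)) (Neg x)) = rank U (Conj Top (Neg x))"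
        by (rule rank_S) (simp add: S_def)
      have e5: "rank U (Neg Bot) = rank U Top"
        by (rule rank_S) (simp add: S_def)
      have e6: "rank U (Conj (Neg Bot) (Neg Bot)) = rank U Top"
        by (rule rank_S) (simp add: S_def)
      show ?thesis
        unfolding strict_part_def preceq_def nmcons_def
        using top e1 e2 e3 e4 e5 e6 by auto
    qed
    have "nmcons U Top Top"
    proof -
      have "rank U (Conj Top (Neg Top)) = \<infinity>" by (rule rank_empty) (simp add: S_def)
      then show ?thesis using top by (simp add: nmcons_def)
    qed
    then show ?thesis using st by (auto simp: Bel_def)
  qed
qed

end
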